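(* Consider the Rayleigh fading channel $y=hx+v$, $v\sim\mathcal{CN}(0,1)$, perfect CSI at transmitter and receiver, $|h|^2$ exponential with unit mean. Let $\mathcal{A}(\mathrm{SNR})$ be a variable PAPR with $\mathcal{A}(\mathrm{SNR})\to\infty$ and $\mathcal{A}(\mathrm{SNR})\,\mathrm{SNR}\to0$ as $\mathrm{SNR}\to0$, and such that the peak constraint is effective ($\mathcal{A}(\mathrm{SNR})\,\mathrm{SNR}<1/\lambda_0$, where $\mathrm{SNR}=\mathbf{E}[[1/\lambda_0-1/|h|^2]^+]$). Let $\lambda$ be determined by $\mathrm{SNR}=\mathbf{E}[\min\{[1/\lambda-1/|h|^2]^+,\mathcal{A}(\mathrm{SNR})\,\mathrm{SNR}\}]$ with $\lambda\mathcal{A}(\mathrm{SNR})\mathrm{SNR}<1$, define $$l(\mathrm{SNR})=\frac{1}{\frac1\lambda-\mathcal{A}(\mathrm{SNR})\,\mathrm{SNR}}-\lambda,$$ and suppose $l_0=\lim_{\mathrm{SNR}\to0}l(\mathrm{SNR})$ exists in $[0,\infty]$. Let $C(\mathrm{SNR})$ be the capacity under average power constraint $\mathrm{SNR}$ and peak power constraint $\mathcal{A}(\mathrm{SNR})\,\mathrm{SNR}$. Then, as $\mathrm{SNR}\to0$, $$C(\mathrm{SNR})\approx\begin{cases}\mathrm{SNR}\log\frac{1}{\mathrm{SNR}}, & l_0>0,\\ \mathrm{SNR}\log\mathcal{A}(\mathrm{SNR}), & l_0=0,\end{cases}$$ where $f\approx g$ means $\lim_{\mathrm{SNR}\to0}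f(\mathrm{SNR})/g(\mathrm{SNR})=1$.
   Context: $[u]^+=\max\{0,u\}$; logarithms are natural. $C(\mathrm{SNR})=\sup\mathbf{E}[\log(1+P(h)|h|^2)]$ over measurable $P(h)\ge0$ with $\mathbf{E}[P(h)]\le\mathrm{SNR}$ and $\max_hP(h)\le\mathcal{A}(\mathrm{SNR})\,\mathrm{SNR}$; it equals $\int_\lambda^\infty\min\{\log(t/\lambda),\log(1+\mathcal{A}(\mathrm{SNR})\mathrm{SNR}\,t)\}e^{-t}dt$. *)

theory Defs
  imports "HOL-Probability.Probability"
begin

text \<open>Distribution of the channel power gain t = |h|^2: exponential with unit mean.\<close>
definition gainM :: "real measure" where
  "gainM = density lborel (exponential_density 1)"

definition Eg :: "(real \<Rightarrow> real) \<Rightarrow> real" where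
  "Eg f = integral\<^sup>L gainM f"

text \<open>Capacity with average power constraint snr and peak power constraint peak:
  sup of E[log(1 + P |h|^2)] over measurable power allocations P \<ge> 0 (as a function of |h|^2)
  with E[P] \<le> snr and P \<le> peak.\<close>
definition capacity :: "real \<Rightarrow> real \<Rightarrow> real" where
  "capacity snr peak = Sup {Eg (\<lambda>t. ln (1 + P t * t)) | P.
      P \<in> borel_measurable borel \<and> (\<forall>t. 0 \<le> P t \<and> P t \<le> peak) \<and>
      integrable gainM P \<and> Eg P \<le> snr}"

end

theory Submission imports Defs "HOL-Real_Asymp.Real_Asymp" begin

lemma gain_prob: "prob_space gainM"
  unfolding gainM_def by (rule prob_space_exponential_density) simp

lemma sets_gainM[measurable_cong, simp]: "sets gainM = sets borel"
  unfolding gainM_def by simp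

lemma space_gainM[simp]: "space gainM = UNIV"
  unfolding gainM_def by simp

lemma AE_gain_pos: "AE t in gainM. 0 < t"
proof -
  have "AE t in lborel. t \<noteq> (0::real)" by (rule AE_lborel_singleton)
  then have "AE t in lborel. ennreal (exponential_density 1 t) \<noteq> 0 \<longrightarrow> 0 < t"
    by eventually_elim (auto simp: exponential_density_def)
  then show ?thesis unfolding gainM_def
    by (subst AE_density) auto
qed

lemma Eg_hasI:
  assumes [measurable]: "f \<in> borel_measurable borel" and nn: "\<And>x. 0 \<le> f x" and c: "0 \<le> c"
    and I: "(\<integral>\<^sup>+x. ennreal (exponential_density 1 x * f x) \<partial>lborel) = ennreal c"
  shows "has_bochner_integral gainM f c"
proof (rule has_bochner_integral_nn_integral)
  show "f \<in> borel_measurable gainM" by simp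
  show "AE x in gainM. 0 \<le> f x" using nn by simp
  show "0 \<le> c" by fact
  have "(\<integral>\<^sup>+x. ennreal (f x) \<partial>gainM) = (\<integral>\<^sup>+x. ennreal (exponential_density 1 x) * ennreal (f x) \<partial>lborel)"
    unfolding gainM_def by (subst nn_integral_density) auto
  also have "\<dots> = (\<integral>\<^sup>+x. ennreal (exponential_density 1 x * f x) \<partial>lborel)"
    by (intro nn_integral_cong) (simp add: ennreal_mult' exponential_density_def)
  finally show "(\<integral>\<^sup>+x. ennreal (f x) \<partial>gainM) = ennreal c" using I by simp
qed

lemma Eg_tail:
  assumes tau: "0 \<le> \<tau>"
  shows "has_bochner_integral gainM (\<lambda>t. max 0 (t - \<tau>)) (exp (-\<tau>))"
proof (rule Eg_hasI)
  have "(\<integral>\<^sup>+x. ennreal (exponential_density 1 x * max 0 (x - \<tau>)) \<partial>lborel)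
      = (\<integral>\<^sup>+x. ennreal ((x - \<tau>) * exp (-x)) * indicator {\<tau>..} x \<partial>lborel)"
    using tau by (intro nn_integral_cong) (auto simp: exponential_density_def indicator_def mult.commute)
  also have "\<dots> = ennreal (0 - (- ((\<tau> - \<tau> + 1) * exp (-\<tau>))))"
  proof (rule nn_integral_FTC_atLeast[where F="\<lambda>x. - ((x - \<tau> + 1) * exp (-x))" and T=0])
    show "(\<lambda>x. (x - \<tau>) * exp (- x)) \<in> borel_measurable borel" by (rule borel_measurable_continuous_onI) (auto intro!: continuous_intros)
    show "\<tau> \<le> x \<Longrightarrow> DERIV (\<lambda>x. - ((x - \<tau> + 1) * exp (-x))) x :> (x - \<tau>) * exp (- x)" for x
      by (auto intro!: derivative_eq_intros simp: algebra_simps)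
    show "\<tau> \<le> x \<Longrightarrow> 0 \<le> (x - \<tau>) * exp (- x)" for x by simp
    show "((\<lambda>x. - ((x - \<tau> + 1) * exp (-x))) \<longlongrightarrow> 0) at_top"
      by real_asymp
  qed
  finally show "(\<integral>\<^sup>+x. ennreal (exponential_density 1 x * max 0 (x - \<tau>)) \<partial>lborel) = ennreal (exp (-\<tau>))"
    by simp
qed (auto)

lemma Eg_ind:
  assumes tau: "0 \<le> \<tau>"
  shows "has_bochner_integral gainM (indicator {\<tau>..}) (exp (-\<tau>))"
proof (rule Eg_hasI)
  have "(\<integral>\<^sup>+x. ennreal (exponential_density 1 x * indicator {\<tau>..} x) \<partial>lborel)
      = (\<integral>\<^sup>+x. ennreal (exp (-x)) * indicator {\<tau>..} x \<partial>lborel)"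
    using tau by (intro nn_integral_cong) (auto simp: exponential_density_def indicator_def)
  also have "\<dots> = ennreal (0 - (- exp (-\<tau>)))"
  proof (rule nn_integral_FTC_atLeast[where F="\<lambda>x. - exp (-x)" and T=0])
    show "(\<lambda>x::real. exp (- x)) \<in> borel_measurable borel" by (rule borel_measurable_continuous_onI) (auto intro!: continuous_intros)
    show "\<tau> \<le> x \<Longrightarrow> DERIV (\<lambda>x. - exp (-x)) x :> exp (- x)" for x
      by (auto intro!: derivative_eq_intros simp: algebra_simps)
    show "\<tau> \<le> x \<Longrightarrow> 0 \<le> exp (- x)" for x by simp
    show "((\<lambda>x::real. - exp (-x)) \<longlongrightarrow> 0) at_top"
      by real_asymp
  qed
  finally show "(\<integral>\<^sup>+x. ennreal (exponential_density 1 x * indicator {\<tau>..} x) \<partial>lborel) = ennreal (exp (-\<tau>))"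
    by simp
qed (auto)


lemma int_tail: "0 \<le> \<tau> \<Longrightarrow> integrable gainM (\<lambda>t. max 0 (t - \<tau>))"
  using Eg_tail by (auto simp: integrable.simps)
lemma Eg_tail_eq: "0 \<le> \<tau> \<Longrightarrow> Eg (\<lambda>t. max 0 (t - \<tau>)) = exp (-\<tau>)"
  unfolding Eg_def by (rule has_bochner_integral_integral_eq[OF Eg_tail])
lemma int_ind: "0 \<le> \<tau> \<Longrightarrow> integrable gainM (indicator {\<tau>..} :: real \<Rightarrow> real)"
  using Eg_ind by (auto simp: integrable.simps)
lemma Eg_ind_eq: "0 \<le> \<tau> \<Longrightarrow> Eg (indicator {\<tau>..}) = exp (-\<tau>)"
  unfolding Eg_def by (rule has_bochner_integral_integral_eq[OF Eg_ind])

lemma int_ln: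
  assumes [measurable]: "P \<in> borel_measurable borel" and P: "\<And>t. 0 \<le> P t \<and> P t \<le> a"
  shows "integrable gainM (\<lambda>t. ln (1 + P t * t))"
proof -
  have i: "integrable gainM (\<lambda>t. a * max 0 (t - 0))" using int_tail[of 0] by simp
  have m: "(\<lambda>t. ln (1 + P t * t)) \<in> borel_measurable gainM" by measurable
  have ae: "AE t in gainM. norm (ln (1 + P t * t)) \<le> norm (a * max 0 (t - 0))"
    using AE_gain_pos
  proof eventually_elim
    case (elim t)
    have a: "0 \<le> a" using P[of t] by linarith
    have "0 \<le> P t * t" using P[of t] elim by simp
    then have "0 \<le> ln (1 + P t * t)" "ln (1 + P t * t) \<le> P t * t" by (simp_all add: ln_add_one_self_le_self)
    moreover have "P t * t \<le> a * t" using P[of t] elim by (simp add: mult_right_mono)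
    ultimately have "ln (1 + P t * t) \<le> a * t" "0 \<le> ln (1 + P t * t)" by linarith+
    then show ?case using elim a by simp
  qed
  show ?thesis by (rule Bochner_Integration.integrable_bound[OF i m ae])
qed

lemma feasible_bound:
  assumes [measurable]: "P \<in> borel_measurable borel" and P: "\<And>t. 0 \<le> P t \<and> P t \<le> a"
    and iP: "integrable gainM P" and EP: "Eg P \<le> s" and tau: "0 \<le> \<tau>"
  shows "Eg (\<lambda>t. ln (1 + P t * t)) \<le> \<tau> * s + a * exp (-\<tau>)"
proof -
  have a: "0 \<le> a" using P[of 0] by linarith
  have "Eg (\<lambda>t. ln (1 + P t * t)) \<le> Eg (\<lambda>t. \<tau> * P t + a * max 0 (t - \<tau>))"
    unfolding Eg_def
  proof (rule integral_mono_AE)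
    show "integrable gainM (\<lambda>t. ln (1 + P t * t))" by (rule int_ln[OF _ P]) simp
    show "integrable gainM (\<lambda>t. \<tau> * P t + a * max 0 (t - \<tau>))"
      using iP int_tail[OF tau] by auto
    show "AE t in gainM. ln (1 + P t * t) \<le> \<tau> * P t + a * max 0 (t - \<tau>)"
      using AE_gain_pos
    proof eventually_elim
      case (elim t)
      have "0 \<le> P t * t" using P[of t] elim by simp
      then have "ln (1 + P t * t) \<le> P t * t" by (simp add: ln_add_one_self_le_self)
      moreover have "P t * t \<le> \<tau> * P t + a * max 0 (t - \<tau>)"
      proof (cases "t \<le> \<tau>")
        case True
        then have "P t * t \<le> P t * \<tau>" using P[of t] by (simp add: mult_left_mono)
        then show ?thesis using a by (simp add: mult.commute add_increasing2)
      next
        case False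
        have "P t * (t - \<tau>) \<le> a * (t - \<tau>)" using P[of t] False by (simp add: mult_right_mono)
        then show ?thesis using False by (simp add: algebra_simps)
      qed
      ultimately show ?case by linarith
    qed
  qed
  also have "\<dots> = \<tau> * Eg P + a * exp (-\<tau>)"
    unfolding Eg_def using iP int_tail[OF tau] Eg_tail_eq[OF tau, unfolded Eg_def] by simp
  also have "\<dots> \<le> \<tau> * s + a * exp (-\<tau>)" using EP tau by (simp add: mult_left_mono)
  finally show ?thesis .
qed

definition capset :: "real \<Rightarrow> real \<Rightarrow> real set" where
  "capset snr peak = {Eg (\<lambda>t. ln (1 + P t * t)) | P.
      P \<in> borel_measurable borel \<and> (\<forall>t. 0 \<le> P t \<and> P t \<le> peak) \<and>
      integrable gainM P \<and> Eg P \<le> snr}"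

lemma capacity_capset: "capacity s a = Sup (capset s a)"
  unfolding capacity_def capset_def ..

lemma capset_le: "x \<in> capset s a \<Longrightarrow> 0 \<le> \<tau> \<Longrightarrow> x \<le> \<tau> * s + a * exp (-\<tau>)"
  unfolding capset_def using feasible_bound by blast

lemma zero_in_capset: "0 \<le> s \<Longrightarrow> 0 \<le> a \<Longrightarrow> 0 \<in> capset s a"
  unfolding capset_def
  by (rule CollectI, rule exI[of _ "\<lambda>_. 0"]) (simp add: Eg_def)

lemma capset_bdd: "bdd_above (capset s a)"
  using capset_le[of _ s a 0] by (intro bdd_aboveI[of _ a]) auto

lemma cap_upper:
  assumes "0 \<le> s" "0 \<le> a" "0 \<le> \<tau>"
  shows "capacity s a \<le> \<tau> * s + a * exp (-\<tau>)"
  unfolding capacity_capset using assms zero_in_capset[of s a]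
  by (intro cSup_least) (auto intro: capset_le)

lemma cap_nonneg:
  assumes "0 \<le> s" "0 \<le> a"
  shows "0 \<le> capacity s a"
  unfolding capacity_capset using assms zero_in_capset[of s a] capset_bdd
  by (intro cSup_upper2[OF zero_in_capset]) auto

lemma cap_lower:
  assumes b: "0 < b" "b \<le> a" and tau: "0 \<le> \<tau>" and s: "b * exp (-\<tau>) \<le> s"
  shows "ln (1 + b * \<tau>) * exp (-\<tau>) \<le> capacity s a"
proof -
  define P where "P = (\<lambda>t. b * indicator {\<tau>..} t :: real)"
  have Pm[measurable]: "P \<in> borel_measurable borel" unfolding P_def by measurable
  have Pb: "\<And>t. 0 \<le> P t \<and> P t \<le> a" using b unfolding P_def by (auto simp: indicator_def)
  have iP: "integrable gainM P" unfolding P_def using int_ind[OF tau] by simp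
  have EP: "Eg P = b * exp (-\<tau>)" unfolding P_def using Eg_ind_eq[OF tau] by (simp add: Eg_def)
  have mem: "Eg (\<lambda>t. ln (1 + P t * t)) \<in> capset s a"
    unfolding capset_def using Pm Pb iP EP s by (intro CollectI exI[of _ P]) auto
  have "ln (1 + b * \<tau>) * exp (-\<tau>) = Eg (\<lambda>t. ln (1 + b * \<tau>) * indicator {\<tau>..} t)"
    using Eg_ind_eq[OF tau] by (simp add: Eg_def)
  also have "\<dots> \<le> Eg (\<lambda>t. ln (1 + P t * t))"
    unfolding Eg_def
  proof (rule integral_mono_AE)
    show "integrable gainM (\<lambda>t. ln (1 + b * \<tau>) * indicator {\<tau>..} t)" using int_ind[OF tau] by simp
    show "integrable gainM (\<lambda>t. ln (1 + P t * t))" by (rule int_ln[OF Pm Pb])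
    show "AE t in gainM. ln (1 + b * \<tau>) * indicator {\<tau>..} t \<le> ln (1 + P t * t)"
      using AE_gain_pos
    proof eventually_elim
      case (elim t)
      show ?case
      proof (cases "\<tau> \<le> t")
        case True
        then have "b * \<tau> \<le> b * t" using b by simp
        then have "ln (1 + b * \<tau>) \<le> ln (1 + b * t)" using b tau True
          by (subst ln_le_cancel_iff) (auto simp: add_pos_nonneg)
        then show ?thesis using True b tau by (simp add: P_def indicator_def)
      next
        case False
        then show ?thesis using elim b by (simp add: P_def indicator_def)
      qed
    qed
  qed
  also have "\<dots> \<le> capacity s a"
    unfolding capacity_capset using mem capset_bdd by (rule cSup_upper)
  finally show ?thesis .
qed


lemma Eg_wf_bound:
  assumes l: "0 < l" and a: "0 \<le> a"
  shows "Eg (\<lambda>t. min (max 0 (1/l - 1/t)) a) \<le> exp (-l) / l"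
proof -
  interpret prob_space gainM by (rule gain_prob)
  have "Eg (\<lambda>t. min (max 0 (1/l - 1/t)) a) \<le> Eg (\<lambda>t. (1/l) * indicator {l..} t)"
    unfolding Eg_def
  proof (rule integral_mono_AE)
    show "integrable gainM (\<lambda>t. min (max 0 (1/l - 1/t)) a)"
      by (rule integrable_const_bound[where B=a]) (use a in auto)
    show "integrable gainM (\<lambda>t. (1/l) * indicator {l..} t)"
      using int_ind[of l] l by simp
    show "AE t in gainM. min (max 0 (1/l - 1/t)) a \<le> (1/l) * indicator {l..} t"
      using AE_gain_pos
    proof eventually_elim
      case (elim t)
      show ?case
      proof (cases "l \<le> t")
        case True
        have "1/l - 1/t \<le> 1/l" using elim by simp
        then have "max 0 (1/l - 1/t) \<le> 1/l" using l by simp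
        then show ?thesis using True l by (auto simp: indicator_def min_le_iff_disj)
      next
        case False
        then have "1/l \<le> 1/t" using elim l by (simp add: frac_le)
        then show ?thesis using False a by (simp add: indicator_def)
      qed
    qed
  qed
  also have "\<dots> = exp (-l) / l" using Eg_ind_eq[of l] l by (simp add: Eg_def)
  finally show ?thesis .
qed

lemma cap_upper2:
  assumes s: "0 < s" and A: "1 \<le> A"
  shows "capacity s (A * s) \<le> s * ln A + s"
proof -
  have "capacity s (A * s) \<le> ln A * s + (A * s) * exp (- ln A)"
    using s A by (intro cap_upper) auto
  also have "(A * s) * exp (- ln A) = s" using A by (simp add: exp_minus)
  finally show ?thesis by (simp add: mult.commute)
qed

lemma cap_lower2:
  assumes s: "0 < s" and A: "1 \<le> A" and As: "A * s \<le> 1"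
    and L: "L = ln (1/s)" "1 \<le> L" and sL: "s * L^2 \<le> 1" and lnL: "2 * ln L \<le> L"
  shows "s * min (ln A) (L - 2 * ln L) * (1 - 1/L) \<le> capacity s (A * s)"
proof -
  define b where "b = min (A * s) (1 / L^2)"
  define \<tau> where "\<tau> = ln (b / s)"
  have L0: "0 < L" using L by linarith
  have b0: "0 < b" using s A L0 by (simp add: b_def)
  have sb: "s \<le> b" unfolding b_def using s A sL L0
    by (auto simp: pos_le_divide_eq mult.commute)
  have b1: "b \<le> 1 / L^2" unfolding b_def by simp
  have "1 / L^2 \<le> 1" using L by (simp add: power_le_one_iff one_le_power)
  then have b1': "b \<le> 1" using b1 by linarith
  have tau0: "0 \<le> \<tau>" unfolding \<tau>_def using sb s by simp
  have etau: "exp (-\<tau>) = s / b" unfolding \<tau>_def using s b0 by (simp add: exp_minus)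
  have bt: "b * exp (-\<tau>) = s" using etau b0 by simp
  have taul: "\<tau> \<le> L" unfolding \<tau>_def L using s b0 b1' by (simp add: ln_div)
  have "b * \<tau> \<le> (1 / L^2) * L" using b1 taul tau0 b0 L0
    by (intro mult_mono) auto
  also have "\<dots> = 1 / L" by (simp add: power2_eq_square)
  finally have btL: "b * \<tau> \<le> 1 / L" .
  have "1 / L \<le> 1" using L by simp
  then have bt1: "b * \<tau> \<le> 1" using btL by linarith
  have bt0: "0 \<le> b * \<tau>" using b0 tau0 by simp
  have cl: "ln (1 + b * \<tau>) * exp (-\<tau>) \<le> capacity s (A * s)"
    using b0 tau0 bt by (intro cap_lower) (auto simp: b_def)
  have "(b * \<tau> - (b * \<tau>)^2) * (s / b) \<le> ln (1 + b * \<tau>) * (s / b)"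
    using ln_one_plus_pos_lower_bound[OF bt0 bt1] s b0 by (intro mult_right_mono) auto
  also have "(b * \<tau> - (b * \<tau>)^2) * (s / b) = s * \<tau> * (1 - b * \<tau>)"
    using b0 by (simp add: field_simps power2_eq_square)
  finally have c1: "s * \<tau> * (1 - b * \<tau>) \<le> capacity s (A * s)" using cl etau by simp
  have "s * \<tau> * (1 - 1/L) \<le> s * \<tau> * (1 - b * \<tau>)"
    using btL s tau0 by (intro mult_left_mono) auto
  moreover have mt: "min (ln A) (L - 2 * ln L) \<le> \<tau>"
  proof (cases "A * s \<le> 1 / L^2")
    case True
    then have "\<tau> = ln A" unfolding \<tau>_def b_def using s by simp
    then show ?thesis by simp
  next
    case False
    then have "\<tau> = ln (1 / (L^2 * s))" unfolding \<tau>_def b_def using s by simp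
    also have "\<dots> = - (2 * ln L) - ln s" using s L0
      by (simp add: ln_div ln_mult ln_realpow)
    also have "\<dots> = L - 2 * ln L" using s L(1) by (simp add: ln_div)
    finally show ?thesis by simp
  qed
  moreover have "0 \<le> 1 - 1/L" using L by simp
  then have "s * min (ln A) (L - 2 * ln L) * (1 - 1/L) \<le> s * \<tau> * (1 - 1/L)"
    using mt s by (intro mult_right_mono mult_left_mono) auto
  ultimately show ?thesis using c1 by linarith
qed

lemma lam_bound:
  fixes l s L :: real
  assumes l: "0 < l" and s: "0 < s" and sl: "s \<le> exp (-l) / l" and L: "L = ln (1/s)" "1 \<le> L"
  shows "l \<le> L"
proof (cases "l \<ge> 1")
  case True
  have "exp (-l) / l \<le> exp (-l)" using True by (simp add: divide_le_eq)
  with sl have "s \<le> exp (-l)" by linarith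
  then have "ln s \<le> -l" using s by (metis ln_exp ln_le_cancel_iff exp_gt_zero)
  then show ?thesis using L s by (simp add: ln_div)
next
  case False then show ?thesis using L by linarith
qed

lemma a_bound:
  fixes c l L a :: real
  assumes c: "0 < c" "c \<le> 1" and l: "0 < l" "l \<le> L" "1 \<le> L" and la: "l * a < 1"
    and lc: "c < 1 / (1 / l - a) - l"
  shows "c / (2 * L^2) \<le> a"
proof -
  have d: "1 / l - a = (1 - l * a) / l" using l by (simp add: field_simps)
  have p: "0 < 1 - l * a" using la by simp
  have "1 / (1 / l - a) - l = l^2 * a / (1 - l * a)"
    unfolding d using l p by (simp add: field_simps power2_eq_square)
  with lc have key: "c * (1 - l * a) < l^2 * a" using p by (simp add: pos_less_divide_eq)
  have L2: "L \<le> L^2" using l by (simp add: power2_eq_square)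
  have L0: "0 < L" using l by linarith
  show ?thesis
  proof (cases "l * a \<ge> 1/2")
    case True
    have "0 < l * a" using True by linarith
    then have a0: "0 < a" using l by (simp add: zero_less_mult_iff)
    have "1 / (2 * L) \<le> a"
    proof -
      have "1 \<le> 2 * (l * a)" using True by simp
      also have "l * a \<le> L * a" using l a0 by (intro mult_right_mono) auto
      then have "2 * (l * a) \<le> 2 * (L * a)" by simp
      finally have "1 \<le> a * (2 * L)" by (simp add: algebra_simps)
      then show ?thesis using L0 by (simp add: pos_divide_le_eq)
    qed
    moreover have "c / (2 * L^2) \<le> 1 / (2 * L^2)"
      using c L0 by (intro divide_right_mono) auto
    moreover have "1 / (2 * L^2) \<le> 1 / (2 * L)"
      using L0 L2 by (intro divide_left_mono) auto
    ultimately show ?thesis by linarith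
  next
    case False
    then have "1/2 \<le> 1 - l * a" by simp
    then have "c * (1/2) \<le> c * (1 - l * a)" using c by (intro mult_left_mono) auto
    with key have h: "c / 2 < l^2 * a" by simp
    have "0 < l^2 * a" using h c by linarith
    then have a0: "0 < a" using l by (simp add: zero_less_mult_iff)
    have "l^2 \<le> L^2" using l by (intro power_mono) auto
    then have "l^2 * a \<le> L^2 * a" using a0 by (intro mult_right_mono) auto
    with h have "c / 2 < L^2 * a" by linarith
    then have "c \<le> a * (2 * L^2)" by (simp add: algebra_simps)
    then show ?thesis using L0 by (simp add: pos_divide_le_eq)
  qed
qed


lemma ratio_lower:
  fixes s x M L C :: real
  assumes s: "0 < s" and x: "0 < x" "x \<le> L" and M: "0 \<le> M" "M \<le> L" and L: "1 \<le> L"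
    and C: "s * min x M * (1 - 1/L) \<le> C"
  shows "(1 - 1/L) * (M / L) \<le> C / (s * x)"
proof -
  have q: "M / L \<le> min x M / x"
  proof (cases "x \<le> M")
    case True then show ?thesis using x M L by (simp add: divide_le_eq)
  next
    case False then show ?thesis using x M L by (simp add: divide_left_mono)
  qed
  have g: "0 \<le> 1 - 1/L" using L by simp
  have "(1 - 1/L) * (M / L) \<le> (1 - 1/L) * (min x M / x)" using q g by (rule mult_left_mono)
  also have "\<dots> = (s * min x M * (1 - 1/L)) / (s * x)" using s x by (simp add: field_simps)
  also have "\<dots> \<le> C / (s * x)" using C s x by (intro divide_right_mono) auto
  finally show ?thesis .
qed

lemma ratio_upper:
  fixes s x C :: real
  assumes s: "0 < s" and x: "0 < x" and C: "C \<le> s * x + s"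
  shows "C / (s * x) \<le> 1 + 1/x"
proof -
  have "C / (s * x) \<le> (s * x + s) / (s * x)" using C s x by (intro divide_right_mono) auto
  also have "\<dots> = 1 + 1/x" using s x by (simp add: field_simps)
  finally show ?thesis .
qed

lemma ratio_lower2:
  fixes s m K L C :: real
  assumes s: "0 < s" and L: "1 \<le> L" and K: "K \<le> m" and C: "s * m * (1 - 1/L) \<le> C"
  shows "(1 - 1/L) * (K / L) \<le> C / (s * L)"
proof -
  have g: "0 \<le> 1 - 1/L" using L by simp
  have "K / L \<le> m / L" using K L by (intro divide_right_mono) auto
  then have "(1 - 1/L) * (K / L) \<le> (1 - 1/L) * (m / L)" using g by (rule mult_left_mono)
  also have "\<dots> = (s * m * (1 - 1/L)) / (s * L)" using s L by (simp add: field_simps)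
  also have "\<dots> \<le> C / (s * L)" using C s L by (intro divide_right_mono) auto
  finally show ?thesis .
qed

lemma ratio_upper2:
  fixes s x L C :: real
  assumes s: "0 < s" and L: "1 \<le> L" and x: "x \<le> L" and C: "C \<le> s * x + s"
  shows "C / (s * L) \<le> 1 + 1/L"
proof -
  have "C \<le> s * L + s" using C x s by (smt (verit) mult_left_mono)
  then have "C / (s * L) \<le> (s * L + s) / (s * L)" using s L by (intro divide_right_mono) auto
  also have "\<dots> = 1 + 1/L" using s L by (simp add: field_simps)
  finally show ?thesis .
qed

lemma lnA_lower:
  fixes s L c A :: real
  assumes s: "0 < s" and L: "L = ln (1/s)" "1 \<le> L" and c: "0 < c" and A: "0 < A"
    and ca: "c / (2 * L^2) \<le> A * s"
  shows "L - 2 * ln L + ln (c/2) \<le> ln A"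
proof -
  have p1: "0 < c / (2 * L^2)" using c L by simp
  have p2: "0 < A * s" using A s by simp
  have "ln (c / (2 * L^2)) \<le> ln (A * s)" using ca p1 p2 by (subst ln_le_cancel_iff) auto
  moreover have "ln (c / (2 * L^2)) = ln (c/2) - 2 * ln L" using c L
    by (simp add: ln_div ln_mult ln_realpow)
  moreover have "ln (A * s) = ln A - L" using A s L by (simp add: ln_mult ln_div)
  ultimately show ?thesis by linarith
qed

theorem theorem2:
  fixes A lam0 lam :: "real \<Rightarrow> real" and l0 :: ereal
  assumes A_inf: "filterlim A at_top (at_right 0)"
    and A_snr: "((\<lambda>s. A s * s) \<longlongrightarrow> 0) (at_right 0)"
    and lam0: "eventually (\<lambda>s. lam0 s > 0 \<and>
                 s = Eg (\<lambda>t. max 0 (1 / lam0 s - 1 / t)) \<and>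
                 A s * s < 1 / lam0 s) (at_right 0)"
    and lam: "eventually (\<lambda>s. lam s > 0 \<and>
                 s = Eg (\<lambda>t. min (max 0 (1 / lam s - 1 / t)) (A s * s)) \<and>
                 lam s * A s * s < 1) (at_right 0)"
    and l0: "((\<lambda>s. ereal (1 / (1 / lam s - A s * s) - lam s)) \<longlongrightarrow> l0) (at_right 0)"
  shows "(l0 > 0 \<longrightarrow>
            ((\<lambda>s. capacity s (A s * s) / (s * ln (1 / s))) \<longlongrightarrow> 1) (at_right 0))
       \<and> (l0 = 0 \<longrightarrow>
            ((\<lambda>s. capacity s (A s * s) / (s * ln (A s))) \<longlongrightarrow> 1) (at_right 0))"
proof -
  let ?F = "at_right (0::real)"
  let ?C = "\<lambda>s. capacity s (A s * s)"
  have ev0: "eventually (\<lambda>s. 0 < s \<and> s < 1) ?F"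
    using eventually_at_right_real[of 0 1] by simp
  have evL1: "eventually (\<lambda>s::real. 1 \<le> ln(1/s)) ?F" by real_asymp
  have evsL: "eventually (\<lambda>s::real. s * ln(1/s)^2 \<le> 1) ?F" by real_asymp
  have evlnL: "eventually (\<lambda>s::real. 2*ln(ln(1/s)) \<le> ln(1/s)) ?F" by real_asymp
  have evA: "eventually (\<lambda>s. 2 \<le> A s) ?F" using A_inf by (simp add: filterlim_at_top)
  have evAs: "eventually (\<lambda>s. A s * s < 1) ?F" using order_tendstoD(2)[OF A_snr, of 1] by simp
  have lnA: "filterlim (\<lambda>s. ln (A s)) at_top ?F" by (rule filterlim_compose[OF ln_at_top A_inf])
  have inv_lnA: "((\<lambda>s. 1 + 1 / ln (A s)) \<longlongrightarrow> 1) ?F"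
    using tendsto_add[OF tendsto_const[of 1] tendsto_inverse_0_at_top[OF lnA]]
    by (simp add: inverse_eq_divide)
  have evB: "eventually (\<lambda>s. 0 < s \<and> 1 \<le> ln (1/s) \<and> 2 \<le> A s \<and> ln (A s) \<le> ln (1/s) \<and>
      s * min (ln (A s)) (ln (1/s) - 2 * ln (ln (1/s))) * (1 - 1/ln (1/s)) \<le> ?C s \<and>
      ?C s \<le> s * ln (A s) + s \<and> 0 \<le> ln (1/s) - 2 * ln (ln (1/s))) ?F"
    using ev0 evL1 evsL evlnL evA evAs
  proof eventually_elim
    case (elim s)
    have A1: "1 \<le> A s" using elim by linarith
    have lA: "ln (A s) \<le> ln (1/s)"
      using elim by (subst ln_le_cancel_iff) (auto simp: pos_le_divide_eq)
    show ?case using elim A1 lA cap_upper2[of s "A s"]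
        cap_lower2[of s "A s" "ln (1/s)"] by auto
  qed
  have part2: "((\<lambda>s. ?C s / (s * ln (A s))) \<longlongrightarrow> 1) ?F"
  proof (rule tendsto_sandwich[of "\<lambda>s. (1 - 1/ln(1/s)) * ((ln(1/s) - 2*ln(ln(1/s)))/ln(1/s))" _ _
        "\<lambda>s. 1 + 1 / ln (A s)"])
    show "eventually (\<lambda>s. (1 - 1/ln(1/s)) * ((ln(1/s) - 2*ln(ln(1/s)))/ln(1/s)) \<le> ?C s / (s * ln (A s))) ?F"
      using evB
    proof eventually_elim
      case (elim s)
      have "0 < ln (A s)" using elim by simp
      then show ?case using elim by (intro ratio_lower) auto
    qed
    show "eventually (\<lambda>s. ?C s / (s * ln (A s)) \<le> 1 + 1 / ln (A s)) ?F"
      using evB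
    proof eventually_elim
      case (elim s)
      have "0 < ln (A s)" using elim by simp
      then show ?case using elim by (intro ratio_upper) auto
    qed
    show "((\<lambda>s. (1 - 1/ln(1/s)) * ((ln(1/s) - 2*ln(ln(1/s)))/ln(1/s))) \<longlongrightarrow> 1) ?F"
      by real_asymp
    show "((\<lambda>s. 1 + 1 / ln (A s)) \<longlongrightarrow> 1) ?F" by (rule inv_lnA)
  qed
  have part1: "((\<lambda>s. ?C s / (s * ln (1 / s))) \<longlongrightarrow> 1) ?F" if pos: "l0 > 0"
  proof -
    obtain c0 where c0: "0 < ereal c0" "ereal c0 < l0" using ereal_dense2[OF pos] by blast
    define c where "c = min c0 1"
    have c: "0 < c" "c \<le> 1" "c \<le> c0" using c0 by (auto simp: c_def)
    have evl: "eventually (\<lambda>s. ereal c0 < ereal (1 / (1 / lam s - A s * s) - lam s)) ?F"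
      using order_tendstoD(1)[OF l0 c0(2)] .
    define k where "k = ln (c/2)"
    have evK: "eventually (\<lambda>s. ln(1/s) - 2 * ln (ln (1/s)) + k \<le> min (ln (A s)) (ln (1/s) - 2 * ln (ln (1/s)))) ?F"
      using evB lam evl
    proof eventually_elim
      case (elim s)
      let ?L = "ln (1/s)" and ?l = "lam s" and ?a = "A s * s"
      have s0: "0 < s" using elim by simp
      have a0: "0 \<le> ?a" using elim by simp
      have "s \<le> exp (- ?l) / ?l" using Eg_wf_bound[of ?l ?a] elim a0 by simp
      then have lL: "?l \<le> ?L" using elim by (intro lam_bound[of ?l s]) auto
      have lc: "c < 1 / (1 / ?l - ?a) - ?l" using elim c by simp
      have la: "?l * ?a < 1" using elim by (simp add: mult.assoc)
      have ca: "c / (2 * ?L^2) \<le> ?a" using a_bound[OF c(1,2) _ lL _ la lc] elim by simp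
      have "?L - 2 * ln ?L + k \<le> ln (A s)" unfolding k_def
        using elim c by (intro lnA_lower[OF s0 refl _ c(1) _ ca]) auto
      moreover have "k \<le> 0" using c by (simp add: k_def)
      ultimately show ?case by simp
    qed
    show ?thesis
    proof (rule tendsto_sandwich[of "\<lambda>s. (1 - 1/ln(1/s)) * ((ln(1/s) - 2*ln(ln(1/s)) + k)/ln(1/s))" _ _
        "\<lambda>s. 1 + 1 / ln (1/s)"])
      show "eventually (\<lambda>s. (1 - 1/ln(1/s)) * ((ln(1/s) - 2*ln(ln(1/s)) + k)/ln(1/s)) \<le> ?C s / (s * ln (1/s))) ?F"
        using evB evK
      proof eventually_elim
        case (elim s)
        let ?m = "min (ln (A s)) (ln (1/s) - 2 * ln (ln (1/s)))"
        from elim have h: "0 < s" "1 \<le> ln (1/s)" "ln(1/s) - 2*ln(ln(1/s)) + k \<le> ?m"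
          "s * ?m * (1 - 1/ln (1/s)) \<le> ?C s" by auto
        show ?case by (rule ratio_lower2[OF h])
      qed
      show "eventually (\<lambda>s. ?C s / (s * ln (1/s)) \<le> 1 + 1 / ln (1/s)) ?F"
        using evB
      proof eventually_elim
        case (elim s)
        then show ?case by (intro ratio_upper2[of s _ "ln (A s)"]) auto
      qed
      show "((\<lambda>s. (1 - 1/ln(1/s)) * ((ln(1/s) - 2*ln(ln(1/s)) + k)/ln(1/s))) \<longlongrightarrow> 1) ?F"
        by real_asymp
      show "((\<lambda>s. 1 + 1 / ln (1/s)) \<longlongrightarrow> 1) ?F" by real_asymp
    qed
  qed
  show ?thesis using part1 part2 by blast
qed

end
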